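(* Let $F$ and $H$ be fixed graphs and let $r\ge |V(F)|$. Then $\widehat{\mathrm{ex}}_r(n,H,\text{Berge-}F)\le O(\mathrm{ex}(n,H,F))+O(n^{|V(H)|-1})$ as $n\to\infty$.
   Context: A hypergraph $\mathcal{H}$ is a Berge copy of a graph $G$ if $V(G)\subseteq V(\mathcal{H})$ and there is a bijection $f:E(G)\to E(\mathcal{H})$ with $e\subseteq f(e)$ for all $e\in E(G)$; $\mathcal{H}$ is Berge-$F$-free if it contains no Berge copy of $F$ as a subhypergraph. The shadow graph of a hypergraph $\mathcal{H}$ is the graph on $V(\mathcal{H})$ in which $uv$ is an edge iff some hyperedge contains both $u$ and $v$. $\widehat{\mathrm{ex}}_r(n,H,\text{Berge-}F)$ is the maximum number of copies of $H$ in the shadow graph of an $r$-uniform Berge-$F$-free $n$-vertex hypergraph. $\mathrm{ex}(n,H,F)$ is the maximum number of copies of $H$ in an $F$-free $n$-vertex graph. *)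

theory Defs
  imports Complex_Main
begin

definition is_graph :: "'a set \<Rightarrow> 'a set set \<Rightarrow> bool" where
  "is_graph V E \<longleftrightarrow> finite V \<and> (\<forall>e\<in>E. e \<subseteq> V \<and> card e = 2)"

definition graph_iso :: "'a set \<Rightarrow> 'a set set \<Rightarrow> 'b set \<Rightarrow> 'b set set \<Rightarrow> bool" where
  "graph_iso V1 E1 V2 E2 \<longleftrightarrow>
     (\<exists>\<phi>. bij_betw \<phi> V1 V2 \<and> (\<forall>x\<in>V1. \<forall>y\<in>V1. ({x, y} \<in> E1 \<longleftrightarrow> {\<phi> x, \<phi> y} \<in> E2)))"

definition num_copies :: "'b set \<Rightarrow> 'b set set \<Rightarrow> 'a set \<Rightarrow> 'a set set \<Rightarrow> nat" where
  "num_copies VH EH V E =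
     card {(V', E'). V' \<subseteq> V \<and> E' \<subseteq> E \<and> (\<forall>e\<in>E'. e \<subseteq> V') \<and> graph_iso V' E' VH EH}"

definition contains_subgraph :: "'b set \<Rightarrow> 'b set set \<Rightarrow> 'a set \<Rightarrow> 'a set set \<Rightarrow> bool" where
  "contains_subgraph VF EF V E \<longleftrightarrow>
     (\<exists>\<phi>. inj_on \<phi> VF \<and> \<phi> ` VF \<subseteq> V \<and> (\<forall>x\<in>VF. \<forall>y\<in>VF. {x, y} \<in> EF \<longrightarrow> {\<phi> x, \<phi> y} \<in> E))"

definition contains_Berge :: "'b set \<Rightarrow> 'b set set \<Rightarrow> 'a set \<Rightarrow> 'a set set \<Rightarrow> bool" where
  "contains_Berge VF EF V HH \<longleftrightarrow>
     (\<exists>\<phi> f. inj_on \<phi> VF \<and> \<phi> ` VF \<subseteq> V \<and> inj_on f EF \<and> f ` EF \<subseteq> HH \<and>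
        (\<forall>e\<in>EF. \<phi> ` e \<subseteq> f e))"

definition shadow :: "'a set set \<Rightarrow> 'a set set" where
  "shadow HH = {{u, v} | u v. u \<noteq> v \<and> (\<exists>h\<in>HH. u \<in> h \<and> v \<in> h)}"

definition uniform_hypergraphs :: "nat \<Rightarrow> nat \<Rightarrow> nat set set set" where
  "uniform_hypergraphs r n = {HH. \<forall>h\<in>HH. h \<subseteq> {0..<n} \<and> card h = r}"

definition ex_gen :: "nat \<Rightarrow> 'b set \<Rightarrow> 'b set set \<Rightarrow> 'c set \<Rightarrow> 'c set set \<Rightarrow> nat" where
  "ex_gen n VH EH VF EF =
     Sup {num_copies VH EH {0..<n} E | E.
            is_graph {0..<n} E \<and> \<not> contains_subgraph VF EF {0..<n} E}"

definition ex_hat :: "nat \<Rightarrow> nat \<Rightarrow> 'b set \<Rightarrow> 'b set set \<Rightarrow> 'c set \<Rightarrow> 'c set set \<Rightarrow> nat" where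
  "ex_hat r n VH EH VF EF =
     Sup {num_copies VH EH {0..<n} (shadow HH) | HH.
            HH \<in> uniform_hypergraphs r n \<and> \<not> contains_Berge VF EF {0..<n} HH}"

end

theory Submission
  imports Defs "HOL-Library.FuncSet"
begin

definition copyset :: "'b set \<Rightarrow> 'b set set \<Rightarrow> nat \<Rightarrow> nat set set \<Rightarrow> (nat set \<times> nat set set) set" where
  "copyset VH EH n G = {(V', E'). V' \<subseteq> {0..<n} \<and> E' \<subseteq> G \<and> (\<forall>e\<in>E'. e \<subseteq> V') \<and> graph_iso V' E' VH EH}"

lemma num_copies_eq: "num_copies VH EH {0..<n} G = card (copyset VH EH n G)"
  unfolding num_copies_def copyset_def by simp

lemma copyset_finite: "finite (copyset VH EH n G)"
proof -
  have "copyset VH EH n G \<subseteq> Pow {0..<n} \<times> Pow (Pow {0..<n})"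
    unfolding copyset_def by auto
  then show ?thesis by (rule finite_subset) auto
qed

lemma copyset_props:
  assumes "(V', E') \<in> copyset VH EH n G" "finite VH"
  shows "card V' = card VH" "E' \<subseteq> Pow V'" "card E' \<le> 2 ^ card VH" "V' \<subseteq> {0..<n}" "E' \<subseteq> G"
proof -
  show c: "card V' = card VH" using assms unfolding copyset_def graph_iso_def
    by (auto intro: bij_betw_same_card)
  show E: "E' \<subseteq> Pow V'" using assms unfolding copyset_def by auto
  show "V' \<subseteq> {0..<n}" "E' \<subseteq> G" using assms unfolding copyset_def by auto
  have "V' \<subseteq> {0..<n}" using assms unfolding copyset_def by auto
  then have "finite V'" by (rule finite_subset) simp
  then have "card E' \<le> card (Pow V')" using E by (intro card_mono) auto
  then show "card E' \<le> 2 ^ card VH" using c \<open>finite V'\<close> by (simp add: card_Pow)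
qed

lemma choose_le_pow: "(n::nat) choose k \<le> n ^ k"
  by (cases "k \<le> n") (auto simp: binomial_le_pow binomial_eq_0)

lemma sdr:
  assumes "finite A" "\<forall>x\<in>A. finite (S x) \<and> card A \<le> card (S x)"
  shows "\<exists>f. inj_on f A \<and> (\<forall>x\<in>A. f x \<in> S x)"
  using assms
proof (induction A rule: finite_induct)
  case empty then show ?case by auto
next
  case (insert a A)
  then have "\<forall>x\<in>A. finite (S x) \<and> card A \<le> card (S x)" by auto
  with insert.IH obtain f where f: "inj_on f A" "\<forall>x\<in>A. f x \<in> S x" by blast
  have fa: "finite (S a)" "card A + 1 \<le> card (S a)" using insert by auto
  have "card (f ` A) \<le> card A" by (rule card_image_le) (use insert in auto)
  then have "card (f ` A) < card (S a)" using fa by simp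
  then have "\<not> S a \<subseteq> f ` A" using card_mono insert(1) by (metis finite_imageI not_le)
  then obtain b where b: "b \<in> S a" "b \<notin> f ` A" by blast
  have "f(a := b) ` A = f ` A" using insert(2) by auto
  then have "inj_on (f(a := b)) (insert a A)" using f(1) b(2) insert(2)
    by (auto simp: inj_on_def)
  moreover have "\<forall>x\<in>insert a A. (f(a := b)) x \<in> S x" using f(2) b(1) insert(2) by auto
  ultimately show ?case by blast
qed

lemma is_graph_finE: "is_graph VF EF \<Longrightarrow> finite EF"
  unfolding is_graph_def by (meson Pow_iff finite_Pow_iff rev_finite_subset subsetI)

lemma berge_of_heavy:
  assumes "is_graph VF EF" "inj_on \<phi> VF" "\<phi> ` VF \<subseteq> {0..<n}" "finite HH"
    "\<forall>e\<in>EF. card EF \<le> card {h\<in>HH. \<phi> ` e \<subseteq> h}"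
  shows "contains_Berge VF EF {0..<n} HH"
proof -
  have "finite EF" using assms(1) by (rule is_graph_finE)
  obtain f where "inj_on f EF" "\<forall>e\<in>EF. f e \<in> {h\<in>HH. \<phi> ` e \<subseteq> h}"
    using sdr[of EF "\<lambda>e. {h\<in>HH. \<phi> ` e \<subseteq> h}"] \<open>finite EF\<close> assms(4,5) by auto
  then show ?thesis unfolding contains_Berge_def using assms(2,3) by blast
qed

lemma uniform_finite: "HH \<in> uniform_hypergraphs r n \<Longrightarrow> finite HH"
proof -
  assume "HH \<in> uniform_hypergraphs r n"
  then have "HH \<subseteq> Pow {0..<n}" unfolding uniform_hypergraphs_def by auto
  then show ?thesis by (rule finite_subset) auto
qed

lemma light_pair:
  assumes "is_graph VF EF" "HH \<in> uniform_hypergraphs r n" "card VF \<le> r"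
    "\<not> contains_Berge VF EF {0..<n} HH" "h \<in> HH"
  shows "\<exists>p. p \<subseteq> h \<and> card p = 2 \<and> card {h'\<in>HH. p \<subseteq> h'} < card EF"
proof -
  have h: "h \<subseteq> {0..<n}" "card h = r" using assms unfolding uniform_hypergraphs_def by auto
  have "finite h" using h(1) by (rule finite_subset) simp
  have "finite VF" using assms(1) unfolding is_graph_def by auto
  obtain \<phi> where \<phi>: "\<phi> ` VF \<subseteq> h" "inj_on \<phi> VF"
    using card_le_inj[of VF h] \<open>finite h\<close> \<open>finite VF\<close> h assms(3) by auto
  have "\<not> (\<forall>e\<in>EF. card EF \<le> card {h\<in>HH. \<phi> ` e \<subseteq> h})"
    using berge_of_heavy[of VF EF \<phi> n HH] assms(1,4) \<phi> h(1) uniform_finite[OF assms(2)] by auto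
  then obtain e where e: "e \<in> EF" "card {h\<in>HH. \<phi> ` e \<subseteq> h} < card EF" by auto
  have "e \<subseteq> VF" "card e = 2" using e(1) assms(1) unfolding is_graph_def by auto
  then have "card (\<phi> ` e) = 2" using \<phi>(2) by (metis card_image inj_on_subset)
  moreover have "\<phi> ` e \<subseteq> h" using \<open>e \<subseteq> VF\<close> \<phi>(1) by auto
  ultimately show ?thesis using e(2) by blast
qed

lemma hyper_card:
  assumes "is_graph VF EF" "HH \<in> uniform_hypergraphs r n" "card VF \<le> r"
    "\<not> contains_Berge VF EF {0..<n} HH"
  shows "card HH \<le> card EF * n^2"
proof -
  have fin: "finite HH" using uniform_finite[OF assms(2)] .
  let ?L = "{p. p \<subseteq> {0..<n} \<and> card p = 2 \<and> card {h'\<in>HH. p \<subseteq> h'} < card EF}"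
  have finL: "finite ?L" by (rule finite_subset[of _ "Pow {0..<n}"]) auto
  have "HH \<subseteq> (\<Union>p\<in>?L. {h'\<in>HH. p \<subseteq> h'})"
  proof
    fix h assume "h \<in> HH"
    then obtain p where "p \<subseteq> h \<and> card p = 2 \<and> card {h'\<in>HH. p \<subseteq> h'} < card EF"
      using light_pair[OF assms] by blast
    moreover have "h \<subseteq> {0..<n}" using \<open>h \<in> HH\<close> assms(2) unfolding uniform_hypergraphs_def by auto
    ultimately show "h \<in> (\<Union>p\<in>?L. {h'\<in>HH. p \<subseteq> h'})" using \<open>h \<in> HH\<close> by blast
  qed
  then have "card HH \<le> card (\<Union>p\<in>?L. {h'\<in>HH. p \<subseteq> h'})"
    by (intro card_mono) (use fin in auto)
  also have "\<dots> \<le> (\<Sum>p\<in>?L. card {h'\<in>HH. p \<subseteq> h'})" by (rule card_UN_le[OF finL])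
  also have "\<dots> \<le> (\<Sum>p\<in>?L. card EF)" by (intro sum_mono) auto
  also have "\<dots> = card ?L * card EF" by simp
  also have "card ?L \<le> n^2"
  proof -
    have "card ?L \<le> card {p. p \<subseteq> {0..<n} \<and> card p = 2}"
      by (intro card_mono) (auto intro: finite_subset[of _ "Pow {0..<n}"])
    also have "\<dots> = n choose 2" using n_subsets[of "{0..<n}" 2] by simp
    also have "\<dots> \<le> n^2" by (rule choose_le_pow)
    finally show ?thesis .
  qed
  then have "card ?L * card EF \<le> n^2 * card EF" by simp
  finally show ?thesis by (simp add: mult.commute)
qed


lemma typeA:
  fixes HH :: "nat set set" and VH :: "'b set" and EH :: "'b set set" and n :: nat and G :: "nat set set"
  assumes fin: "finite HH" and unif: "\<forall>h\<in>HH. card h = r" and unifin: "\<forall>h\<in>HH. finite h" and fVH: "finite VH"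
  defines "A \<equiv> {c \<in> copyset VH EH n G. \<exists>h\<in>HH. \<exists>e1\<in>snd c. \<exists>e2\<in>snd c. e1 \<noteq> e2 \<and> e1 \<subseteq> h \<and> e2 \<subseteq> h}"
  assumes G2: "\<forall>e\<in>G. card e = 2"
  shows "card A \<le> 2^(2^card VH) * (card HH * r^3 * n^(card VH - 3))"
    "A \<noteq> {} \<Longrightarrow> card VH \<ge> 3"
proof -
  let ?k = "card VH"
  define W where "W = {V'. V' \<subseteq> {0..<n} \<and> card V' = ?k \<and> (\<exists>h\<in>HH. \<exists>T. T \<subseteq> h \<and> card T = 3 \<and> T \<subseteq> V')}"
  have AW: "A \<subseteq> Sigma W (\<lambda>V'. Pow (Pow V'))"
  proof
    fix c assume c: "c \<in> A"
    obtain V' E' where cv: "c = (V', E')" by (cases c)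
    have cs: "(V', E') \<in> copyset VH EH n G" using c cv unfolding A_def by auto
    note P = copyset_props[OF cs fVH]
    obtain h e1 e2 where h: "h \<in> HH" "e1 \<in> E'" "e2 \<in> E'" "e1 \<noteq> e2" "e1 \<subseteq> h" "e2 \<subseteq> h"
      using c cv unfolding A_def by auto
    have c2: "card e1 = 2" "card e2 = 2" using h(2,3) P(5) G2 by auto
    have fe: "finite e1" "finite e2" using c2 by (auto intro: card_ge_0_finite)
    have "card (e1 \<union> e2) \<ge> 3"
    proof (rule ccontr)
      assume "\<not> 3 \<le> card (e1 \<union> e2)"
      moreover have "card e1 \<le> card (e1 \<union> e2)" "card e2 \<le> card (e1 \<union> e2)"
        using fe by (auto intro: card_mono)
      ultimately have "card (e1 \<union> e2) = card e1" "card (e1 \<union> e2) = card e2" using c2 by auto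
      then have "e1 = e1 \<union> e2" "e2 = e1 \<union> e2" using fe
        by (metis Un_upper1 Un_upper2 card_subset_eq finite_UnI)+
      then show False using h(4) by auto
    qed
    then obtain T where T: "T \<subseteq> e1 \<union> e2" "card T = 3"
      by (meson obtain_subset_with_card_n)
    have "T \<subseteq> h" using T(1) h by auto
    have "T \<subseteq> V'" using T(1) h(2,3) P(2) by blast
    have "V' \<in> W" unfolding W_def mem_Collect_eq
      using P(1,4) h(1) T(2) \<open>T \<subseteq> h\<close> \<open>T \<subseteq> V'\<close> by (intro conjI bexI[of _ h] exI[of _ T]) auto
    then show "c \<in> Sigma W (\<lambda>V'. Pow (Pow V'))" using cv P(2) by auto
  qed
  have WU: "W \<subseteq> (\<Union>h\<in>HH. \<Union>T\<in>{T. T \<subseteq> h \<and> card T = 3}. (\<lambda>U. T \<union> U) ` {U. U \<subseteq> {0..<n} \<and> card U = ?k - 3})"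
  proof
    fix V' assume "V' \<in> W"
    then obtain h T where hT: "h \<in> HH" "T \<subseteq> h" "card T = 3" "T \<subseteq> V'" "V' \<subseteq> {0..<n}" "card V' = ?k"
      unfolding W_def by auto
    have "finite V'" using hT(5) by (rule finite_subset) simp
    have e1: "V' = T \<union> (V' - T)" using hT(4) by auto
    have e2: "card (V' - T) = ?k - 3"
      using hT(3,4,6) card_Diff_subset[OF finite_subset[OF hT(4) \<open>finite V'\<close>] hT(4)] by simp
    have e3: "V' - T \<in> {U. U \<subseteq> {0..<n} \<and> card U = ?k - 3}" using e2 hT(5) by auto
    have e4: "V' \<in> (\<lambda>U. T \<union> U) ` {U. U \<subseteq> {0..<n} \<and> card U = ?k - 3}"
      using e1 e3 by (rule image_eqI)
    have e5: "T \<in> {T. T \<subseteq> h \<and> card T = 3}" using hT(2,3) by simp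
    show "V' \<in> (\<Union>h\<in>HH. \<Union>T\<in>{T. T \<subseteq> h \<and> card T = 3}. (\<lambda>U. T \<union> U) ` {U. U \<subseteq> {0..<n} \<and> card U = ?k - 3})"
      using hT(1) e5 e4 by (intro UN_I)
  qed
  have finH: "\<And>h. h \<in> HH \<Longrightarrow> finite h" using unifin by auto
  have finHT: "\<And>h. h \<in> HH \<Longrightarrow> finite {T. T \<subseteq> h \<and> card T = 3}"
  proof -
    fix h assume "h \<in> HH"
    show "finite {T. T \<subseteq> h \<and> card T = 3}"
      by (rule finite_subset[of _ "Pow h"]) (auto simp: finH[OF \<open>h \<in> HH\<close>])
  qed
  have finU: "finite {U. U \<subseteq> {0..<n} \<and> card U = ?k - 3}" by (rule finite_subset[of _ "Pow {0..<n}"]) auto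
  have cardU: "card ((\<lambda>U. T \<union> U) ` {U. U \<subseteq> {0..<n} \<and> card U = ?k - 3}) \<le> n choose (?k - 3)" for T
  proof -
    have "card ((\<lambda>U. T \<union> U) ` {U. U \<subseteq> {0..<n} \<and> card U = ?k - 3}) \<le> card {U. U \<subseteq> {0..<n} \<and> card U = ?k - 3}"
      by (rule card_image_le[OF finU])
    also have "\<dots> = n choose (?k - 3)" using n_subsets[of "{0..<n}" "?k - 3"] by simp
    finally show ?thesis .
  qed
  have finW: "finite W" unfolding W_def by (rule finite_subset[of _ "Pow {0..<n}"]) auto
  have "card W \<le> card (\<Union>h\<in>HH. \<Union>T\<in>{T. T \<subseteq> h \<and> card T = 3}. (\<lambda>U. T \<union> U) ` {U. U \<subseteq> {0..<n} \<and> card U = ?k - 3})"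
    by (rule card_mono[OF _ WU]) (use fin finHT finU in auto)
  also have "\<dots> \<le> (\<Sum>h\<in>HH. card (\<Union>T\<in>{T. T \<subseteq> h \<and> card T = 3}. (\<lambda>U. T \<union> U) ` {U. U \<subseteq> {0..<n} \<and> card U = ?k - 3}))"
    by (rule card_UN_le[OF fin])
  also have "\<dots> \<le> (\<Sum>h\<in>HH. (r choose 3) * (n choose (?k - 3)))"
  proof (rule sum_mono)
    fix h assume "h \<in> HH"
    have "card (\<Union>T\<in>{T. T \<subseteq> h \<and> card T = 3}. (\<lambda>U. T \<union> U) ` {U. U \<subseteq> {0..<n} \<and> card U = ?k - 3})
       \<le> (\<Sum>T\<in>{T. T \<subseteq> h \<and> card T = 3}. card ((\<lambda>U. T \<union> U) ` {U. U \<subseteq> {0..<n} \<and> card U = ?k - 3}))"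
      by (rule card_UN_le[OF finHT[OF \<open>h \<in> HH\<close>]])
    also have "\<dots> \<le> (\<Sum>T\<in>{T. T \<subseteq> h \<and> card T = 3}. n choose (?k - 3))"
      by (rule sum_mono) (rule cardU)
    also have "\<dots> = (r choose 3) * (n choose (?k - 3))"
      using n_subsets[OF finH[OF \<open>h \<in> HH\<close>], of 3] unif \<open>h \<in> HH\<close> by simp
    finally show "card (\<Union>T\<in>{T. T \<subseteq> h \<and> card T = 3}. (\<lambda>U. T \<union> U) ` {U. U \<subseteq> {0..<n} \<and> card U = ?k - 3})
       \<le> (r choose 3) * (n choose (?k - 3))" .
  qed
  also have "\<dots> = card HH * ((r choose 3) * (n choose (?k - 3)))" by simp
  also have "\<dots> \<le> card HH * (r^3 * n^(?k - 3))"
    by (intro mult_le_mono2 mult_le_mono choose_le_pow)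
  finally have cW: "card W \<le> card HH * r^3 * n^(?k - 3)" by (simp add: mult.assoc)
  have "card A \<le> card (Sigma W (\<lambda>V'. Pow (Pow V')))"
  proof (rule card_mono[OF _ AW])
    have "\<And>V'. V' \<in> W \<Longrightarrow> finite V'" unfolding W_def by (auto intro: finite_subset[OF _ finite_atLeastLessThan])
    then show "finite (Sigma W (\<lambda>V'. Pow (Pow V')))" using finW by auto
  qed
  also have "\<dots> = (\<Sum>V'\<in>W. 2^(2^?k))"
  proof -
    have fV: "\<And>V'. V' \<in> W \<Longrightarrow> finite V'" unfolding W_def by (auto intro: finite_subset[OF _ finite_atLeastLessThan])
    have cP: "\<And>V'. V' \<in> W \<Longrightarrow> card (Pow (Pow V')) = 2^(2^?k)"
    proof -
      fix V' assume "V' \<in> W"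
      then have "finite V'" "card V' = ?k" using fV[OF \<open>V' \<in> W\<close>] unfolding W_def by simp_all
      then show "card (Pow (Pow V')) = 2^(2^?k)" by (simp add: card_Pow)
    qed
    have "card (Sigma W (\<lambda>V'. Pow (Pow V'))) = (\<Sum>V'\<in>W. card (Pow (Pow V')))"
      by (rule card_SigmaI[OF finW]) (simp add: fV)
    also have "\<dots> = (\<Sum>V'\<in>W. 2^(2^?k))"
      by (rule sum.cong[OF refl]) (rule cP)
    finally show ?thesis .
  qed
  also have "\<dots> = card W * 2^(2^?k)" by simp
  finally have cA: "card A \<le> card W * 2^(2^?k)" .
  have "card W * 2^(2^?k) \<le> (card HH * r^3 * n^(?k - 3)) * 2^(2^?k)"
    using cW by (rule mult_le_mono1)
  with cA have "card A \<le> (card HH * r^3 * n^(?k - 3)) * 2^(2^?k)" by (rule le_trans)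
  then show "card A \<le> 2^(2^card VH) * (card HH * r^3 * n^(card VH - 3))"
    by (simp only: mult.commute[of "2^(2^card VH)"])
  show "A \<noteq> {} \<Longrightarrow> card VH \<ge> 3"
  proof -
    assume "A \<noteq> {}"
    then obtain c where "c \<in> A" by auto
    then have "c \<in> Sigma W (\<lambda>V'. Pow (Pow V'))" using AW by auto
    then have "fst c \<in> W" by auto
    then obtain T where "T \<subseteq> fst c" "card T = 3" "card (fst c) = ?k" "fst c \<subseteq> {0..<n}"
      unfolding W_def by auto
    moreover have "finite (fst c)" using calculation(4) by (rule finite_subset) simp
    ultimately have "card T \<le> card (fst c)" by (intro card_mono) auto
    then show ?thesis using \<open>card T = 3\<close> \<open>card (fst c) = ?k\<close> by simp
  qed
qed


lemma shadow_edge: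
  assumes "e \<in> shadow HH"
  shows "card e = 2" "\<exists>h. h \<in> HH \<and> e \<subseteq> h"
  using assms unfolding shadow_def by auto

lemma graph_free:
  assumes gF: "is_graph VF EF" and nb: "\<not> contains_Berge VF EF {0..<n} HH"
    and pQ: "\<forall>h\<in>HH. p h \<subseteq> h \<and> card (p h) = 2"
  shows "\<not> contains_subgraph VF EF {0..<n} (p ` HH)"
proof
  assume "contains_subgraph VF EF {0..<n} (p ` HH)"
  then obtain \<phi> where \<phi>: "inj_on \<phi> VF" "\<phi> ` VF \<subseteq> {0..<n}"
     "\<forall>x\<in>VF. \<forall>y\<in>VF. {x, y} \<in> EF \<longrightarrow> {\<phi> x, \<phi> y} \<in> p ` HH"
    unfolding contains_subgraph_def by blast
  have ex: "\<exists>h. h \<in> HH \<and> p h = \<phi> ` e" if "e \<in> EF" for e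
  proof -
    have "e \<subseteq> VF" "card e = 2" using that gF unfolding is_graph_def by auto
    then obtain x y where xy: "e = {x,y}" "x \<noteq> y" by (meson card_2_iff)
    then have "{\<phi> x, \<phi> y} \<in> p ` HH" using \<phi>(3) \<open>e \<subseteq> VF\<close> that by auto
    then show ?thesis using xy by auto
  qed
  define f where "f e = (SOME h. h \<in> HH \<and> p h = \<phi> ` e)" for e
  have f: "f e \<in> HH \<and> p (f e) = \<phi> ` e" if "e \<in> EF" for e
    using someI_ex[OF ex[OF that]] unfolding f_def .
  have "inj_on f EF"
  proof (rule inj_onI)
    fix e1 e2 assume e: "e1 \<in> EF" "e2 \<in> EF" "f e1 = f e2"
    then have "\<phi> ` e1 = \<phi> ` e2" using f[OF e(1)] f[OF e(2)] by simp
    moreover have "e1 \<subseteq> VF" "e2 \<subseteq> VF" using e gF unfolding is_graph_def by auto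
    ultimately show "e1 = e2" using \<phi>(1) by (simp add: inj_on_image_eq_iff)
  qed
  moreover have "\<forall>e\<in>EF. \<phi> ` e \<subseteq> f e"
  proof
    fix e assume "e \<in> EF"
    then show "\<phi> ` e \<subseteq> f e" using f[OF \<open>e \<in> EF\<close>] pQ by metis
  qed
  moreover have "f ` EF \<subseteq> HH" using f by auto
  ultimately have "contains_Berge VF EF {0..<n} HH" unfolding contains_Berge_def using \<phi>(1,2) by blast
  with nb show False by simp
qed

lemma ex_gen_upper:
  assumes "is_graph {0..<n} E" "\<not> contains_subgraph VF EF {0..<n} E"
  shows "num_copies VH EH {0..<n} E \<le> ex_gen n VH EH VF EF"
proof -
  let ?S = "{num_copies VH EH {0..<n} E | E. is_graph {0..<n} E \<and> \<not> contains_subgraph VF EF {0..<n} E}"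
  have "?S \<subseteq> (\<lambda>E. num_copies VH EH {0..<n} E) ` Pow (Pow {0..<n})"
    unfolding is_graph_def by auto
  then have fin: "finite ?S" by (rule finite_subset) simp
  have mem: "num_copies VH EH {0..<n} E \<in> ?S" using assms by auto
  show ?thesis unfolding ex_gen_def by (rule cSup_upper[OF mem bdd_above_finite[OF fin]])
qed

lemma card_filter_sum: "finite A \<Longrightarrow> card {x\<in>A. P x} = (\<Sum>x\<in>A. if P x then 1 else 0)"
  by (simp add: sum.inter_filter[symmetric])


lemma typeB:
  fixes HH :: "nat set set" and VH :: "'b set" and EH :: "'b set set" and VF :: "'c set" and EF :: "'c set set"
    and n r :: nat
  assumes unif: "HH \<in> uniform_hypergraphs r n" and r2: "r \<ge> 2"
    and nb: "\<not> contains_Berge VF EF {0..<n} HH" and gF: "is_graph VF EF" and fVH: "finite VH"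
  defines "B \<equiv> {c \<in> copyset VH EH n (shadow HH). \<forall>h\<in>HH. \<forall>e1\<in>snd c. \<forall>e2\<in>snd c. e1 \<subseteq> h \<and> e2 \<subseteq> h \<longrightarrow> e1 = e2}"
  shows "card B \<le> (r choose 2)^(2^card VH) * ex_gen n VH EH VF EF"
proof -
  let ?k = "card VH"
  let ?C = "r choose 2"
  let ?m = "card HH"
  let ?ex = "ex_gen n VH EH VF EF"
  let ?CS = "\<lambda>p. copyset VH EH n (p ` HH)"
  have finHH: "finite HH" by (rule uniform_finite[OF unif])
  have hsub: "h \<subseteq> {0..<n}" "card h = r" if "h \<in> HH" for h
    using unif that unfolding uniform_hypergraphs_def by auto
  have hfin: "finite h" if "h \<in> HH" for h
    using hsub(1)[OF that] by (rule finite_subset) simp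
  define Q where "Q h = {e. e \<subseteq> h \<and> card e = 2}" for h :: "nat set"
  have cQ: "card (Q h) = ?C" if "h \<in> HH" for h
    using n_subsets[OF hfin[OF that], of 2] hsub(2)[OF that] unfolding Q_def by simp
  have finQ: "finite (Q h)" if "h \<in> HH" for h
    unfolding Q_def by (rule finite_subset[of _ "Pow h"]) (auto simp: hfin[OF that])
  have C1: "?C \<ge> 1" using r2 by (simp add: Suc_le_eq)
  define P where "P = PiE HH Q"
  have finP: "finite P" unfolding P_def using finHH finQ by (intro finite_PiE) auto
  have cardP: "card P = ?C ^ ?m"
  proof -
    have "card P = (\<Prod>h\<in>HH. card (Q h))" unfolding P_def by (rule card_PiE[OF finHH])
    also have "\<dots> = (\<Prod>h\<in>HH. ?C)" by (rule prod.cong[OF refl]) (rule cQ)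
    finally show ?thesis by simp
  qed
  have pgood: "\<forall>h\<in>HH. p h \<subseteq> h \<and> card (p h) = 2" if "p \<in> P" for p
    using that unfolding P_def Q_def by (auto simp: PiE_iff)
  have Np: "card (?CS p) \<le> ?ex" if "p \<in> P" for p
  proof -
    have "is_graph {0..<n} (p ` HH)" unfolding is_graph_def using pgood[OF that] hsub(1) by fastforce
    moreover have "\<not> contains_subgraph VF EF {0..<n} (p ` HH)" using graph_free[OF gF nb pgood[OF that]] .
    ultimately show ?thesis using ex_gen_upper[of n "p ` HH" VF EF VH EH] num_copies_eq by metis
  qed
  have key: "?C ^ ?m \<le> ?C ^ (2^?k) * card {p \<in> P. c \<in> ?CS p}" if "c \<in> B" for c
  proof -
    obtain V' E' where cv: "c = (V', E')" by (cases c)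
    have cs: "(V', E') \<in> copyset VH EH n (shadow HH)"
      and uniq: "\<forall>h\<in>HH. \<forall>e1\<in>E'. \<forall>e2\<in>E'. e1 \<subseteq> h \<and> e2 \<subseteq> h \<longrightarrow> e1 = e2"
      using that cv unfolding B_def by auto
    note CP = copyset_props[OF cs fVH]
    define g where "g e = (SOME h. h \<in> HH \<and> e \<subseteq> h)" for e
    have g: "g e \<in> HH \<and> e \<subseteq> g e \<and> card e = 2" if "e \<in> E'" for e
    proof -
      have sh: "e \<in> shadow HH" using CP(5) that by auto
      have "g e \<in> HH \<and> e \<subseteq> g e" unfolding g_def by (rule someI_ex[OF shadow_edge(2)[OF sh]])
      then show ?thesis using shadow_edge(1)[OF sh] by simp
    qed
    have ginj: "inj_on g E'"
    proof (rule inj_onI)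
      fix e1 e2 assume e: "e1 \<in> E'" "e2 \<in> E'" "g e1 = g e2"
      then have "g e1 \<in> HH" "e1 \<subseteq> g e1" "e2 \<subseteq> g e1" using g[OF e(1)] g[OF e(2)] by auto
      then show "e1 = e2" using uniq e(1,2) by blast
    qed
    have finV: "finite V'" using CP(4) by (rule finite_subset) simp
    have finE: "finite E'" using CP(2) finV by (meson finite_Pow_iff finite_subset)
    define Q' where "Q' h = (if h \<in> g ` E' then {e \<in> E'. g e = h} else Q h)" for h
    have sub: "PiE HH Q' \<subseteq> {p \<in> P. c \<in> ?CS p}"
    proof
      fix p assume p: "p \<in> PiE HH Q'"
      have "Q' h \<subseteq> Q h" if "h \<in> HH" for h unfolding Q'_def Q_def using g by auto
      then have "p \<in> P" unfolding P_def using p PiE_mono by blast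
      moreover have "E' \<subseteq> p ` HH"
      proof
        fix e assume "e \<in> E'"
        then have ge: "g e \<in> HH" "g e \<in> g ` E'" using g by auto
        then have "p (g e) \<in> Q' (g e)" using p by (auto simp: PiE_iff)
        then have "p (g e) \<in> {e' \<in> E'. g e' = g e}" using ge(2) unfolding Q'_def by simp
        then have "p (g e) = e" using ginj \<open>e \<in> E'\<close> by (auto dest: inj_onD)
        then show "e \<in> p ` HH" using ge(1) by (metis image_eqI)
      qed
      moreover have "c \<in> ?CS p" using cs cv \<open>E' \<subseteq> p ` HH\<close> unfolding copyset_def by auto
      ultimately show "p \<in> {p \<in> P. c \<in> ?CS p}" by simp
    qed
    have gE: "g ` E' \<subseteq> HH" using g by auto
    have cgE: "card (g ` E') = card E'" using card_image[OF ginj] .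
    have cQ': "card (PiE HH Q') = ?C ^ (?m - card E')"
    proof -
      have "card (PiE HH Q') = (\<Prod>h\<in>HH. card (Q' h))" by (rule card_PiE[OF finHH])
      also have "\<dots> = (\<Prod>h\<in>HH. if h \<in> g ` E' then 1 else ?C)"
      proof (rule prod.cong[OF refl])
        fix h assume "h \<in> HH"
        show "card (Q' h) = (if h \<in> g ` E' then 1 else ?C)"
        proof (cases "h \<in> g ` E'")
          case True
          then obtain e where e: "e \<in> E'" "h = g e" by auto
          then have "{e' \<in> E'. g e' = h} = {e}" using ginj by (auto dest: inj_onD)
          then show ?thesis using True unfolding Q'_def by simp
        next
          case False then show ?thesis unfolding Q'_def using cQ[OF \<open>h \<in> HH\<close>] by simp
        qed
      qed
      also have "\<dots> = (\<Prod>h\<in>HH - g ` E'. ?C)"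
      proof -
        have "(\<Prod>h\<in>HH. if h \<in> g ` E' then 1 else ?C) = (\<Prod>h\<in>HH \<inter> {x. x \<in> g ` E'}. 1) * (\<Prod>h\<in>HH \<inter> - {x. x \<in> g ` E'}. ?C)"
          by (rule prod.If_cases[OF finHH])
        also have "HH \<inter> - {x. x \<in> g ` E'} = HH - g ` E'" by auto
        finally show ?thesis by simp
      qed
      also have "\<dots> = ?C ^ card (HH - g ` E')" by simp
      also have "card (HH - g ` E') = ?m - card E'"
        using card_Diff_subset[OF finite_imageI[OF finE] gE] cgE by simp
      finally show ?thesis .
    qed
    have "card E' \<le> ?m" using cgE card_mono[OF finHH gE] by simp
    then have "?C ^ ?m = ?C ^ card E' * ?C ^ (?m - card E')" by (simp add: power_add[symmetric])
    also have "\<dots> \<le> ?C ^ (2^?k) * ?C ^ (?m - card E')"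
      by (intro mult_le_mono1 power_increasing CP(3) C1)
    also have "\<dots> \<le> ?C ^ (2^?k) * card {p \<in> P. c \<in> ?CS p}"
      using card_mono[OF _ sub] finP cQ' by (intro mult_le_mono2) simp
    finally show ?thesis .
  qed
  have finB: "finite B" unfolding B_def by (rule finite_subset[OF _ copyset_finite]) auto
  have "card B * ?C ^ ?m = (\<Sum>c\<in>B. ?C ^ ?m)" by simp
  also have "\<dots> \<le> (\<Sum>c\<in>B. ?C ^ (2^?k) * card {p \<in> P. c \<in> ?CS p})"
    by (rule sum_mono) (rule key)
  also have "\<dots> = ?C ^ (2^?k) * (\<Sum>c\<in>B. card {p \<in> P. c \<in> ?CS p})"
    by (simp add: sum_distrib_left)
  also have "(\<Sum>c\<in>B. card {p \<in> P. c \<in> ?CS p}) = (\<Sum>p\<in>P. card {c \<in> B. c \<in> ?CS p})"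
  proof -
    have "(\<Sum>c\<in>B. card {p \<in> P. c \<in> ?CS p}) = (\<Sum>c\<in>B. \<Sum>p\<in>P. if c \<in> ?CS p then 1 else 0)"
      using card_filter_sum[OF finP] by simp
    also have "\<dots> = (\<Sum>p\<in>P. \<Sum>c\<in>B. if c \<in> ?CS p then 1 else 0)" by (rule sum.swap)
    also have "\<dots> = (\<Sum>p\<in>P. card {c \<in> B. c \<in> ?CS p})"
      using card_filter_sum[OF finB] by simp
    finally show ?thesis .
  qed
  also have "(\<Sum>p\<in>P. card {c \<in> B. c \<in> ?CS p}) \<le> (\<Sum>p\<in>P. ?ex)"
  proof (rule sum_mono)
    fix p assume "p \<in> P"
    have "card {c \<in> B. c \<in> ?CS p} \<le> card (?CS p)"
      by (rule card_mono[OF copyset_finite]) auto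
    then show "card {c \<in> B. c \<in> ?CS p} \<le> ?ex" using Np[OF \<open>p \<in> P\<close>] by simp
  qed
  also have "(\<Sum>p\<in>P. ?ex) = ?C ^ ?m * ?ex" using cardP by simp
  finally have "card B * ?C ^ ?m \<le> ?C ^ (2^?k) * (?C ^ ?m * ?ex)" by simp
  then have "card B * ?C ^ ?m \<le> (?C ^ (2^?k) * ?ex) * ?C ^ ?m" by (simp add: ac_simps)
  moreover have "?C ^ ?m > 0" using C1 r2 by simp
  ultimately show ?thesis by (metis mult_le_cancel2 not_gr0)
qed


lemma main_bound:
  fixes VF :: "'a set" and EF :: "'a set set" and VH :: "'b set" and EH :: "'b set set"
    and r n :: nat and HH :: "nat set set"
  assumes gF: "is_graph VF EF" and gH: "is_graph VH EH" and rF: "r \<ge> card VF" and nF: "n \<ge> card VF"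
    and unif: "HH \<in> uniform_hypergraphs r n" and nb: "\<not> contains_Berge VF EF {0..<n} HH"
  shows "num_copies VH EH {0..<n} (shadow HH)
     \<le> ((r choose 2) + 1)^(2^card VH) * ex_gen n VH EH VF EF
       + 2^(2^card VH) * card EF * r^3 * n ^ (card VH - 1)"
proof -
  let ?k = "card VH"
  let ?ex = "ex_gen n VH EH VF EF"
  have fVH: "finite VH" using gH unfolding is_graph_def by auto
  have finHH: "finite HH" by (rule uniform_finite[OF unif])
  have hsub: "h \<subseteq> {0..<n}" "card h = r" if "h \<in> HH" for h
    using unif that unfolding uniform_hypergraphs_def by auto
  have hfin: "finite h" if "h \<in> HH" for h
    using hsub(1)[OF that] by (rule finite_subset) simp
  have pw: "1 \<le> ((r choose 2) + 1)^(2^?k)" by (rule one_le_power) simp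
  show ?thesis
  proof (cases "r < 2")
    case True
    have sh: "shadow HH = {}"
    proof -
      have False if "u \<noteq> v" "h \<in> HH" "u \<in> h" "v \<in> h" for u v h
      proof -
        have "card {u,v} \<le> card h" using that hfin[OF that(2)] by (intro card_mono) auto
        then show False using that(1) True hsub(2)[OF that(2)] by simp
      qed
      then show ?thesis unfolding shadow_def by blast
    qed
    have "finite VF" using gF unfolding is_graph_def by auto
    have "EF \<noteq> {}"
    proof
      assume "EF = {}"
      obtain \<phi> where "\<phi> ` VF \<subseteq> {0..<n}" "inj_on \<phi> VF"
        using card_le_inj[of VF "{0..<n}"] \<open>finite VF\<close> nF by auto
      then have "contains_Berge VF EF {0..<n} HH" unfolding contains_Berge_def using \<open>EF = {}\<close> by auto
      with nb show False by simp
    qed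
    then obtain e where "e \<in> EF" by auto
    then have "e \<subseteq> VF" "card e = 2" using gF unfolding is_graph_def by auto
    then obtain x y where xy: "e = {x,y}" "x \<in> VF" "y \<in> VF" by (metis card_2_iff insert_subset)
    have "\<not> contains_subgraph VF EF {0..<n} {}"
    proof
      assume "contains_subgraph VF EF {0..<n} {}"
      then show False unfolding contains_subgraph_def using \<open>e \<in> EF\<close> xy by auto
    qed
    moreover have "is_graph {0..<n} {}" unfolding is_graph_def by simp
    ultimately have "num_copies VH EH {0..<n} {} \<le> ?ex" using ex_gen_upper by blast
    also have "\<dots> \<le> ((r choose 2) + 1)^(2^?k) * ?ex" using pw by simp
    finally show ?thesis using sh by simp
  next
    case False
    then have r2: "r \<ge> 2" by simp
    define A where "A = {c \<in> copyset VH EH n (shadow HH). \<exists>h\<in>HH. \<exists>e1\<in>snd c. \<exists>e2\<in>snd c. e1 \<noteq> e2 \<and> e1 \<subseteq> h \<and> e2 \<subseteq> h}"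
    define B where "B = {c \<in> copyset VH EH n (shadow HH). \<forall>h\<in>HH. \<forall>e1\<in>snd c. \<forall>e2\<in>snd c. e1 \<subseteq> h \<and> e2 \<subseteq> h \<longrightarrow> e1 = e2}"
    have split: "copyset VH EH n (shadow HH) = A \<union> B" "A \<inter> B = {}" unfolding A_def B_def by blast+
    have finA: "finite A" unfolding A_def by (rule finite_subset[OF _ copyset_finite]) auto
    have finB: "finite B" unfolding B_def by (rule finite_subset[OF _ copyset_finite]) auto
    have num: "num_copies VH EH {0..<n} (shadow HH) = card A + card B"
      using num_copies_eq split card_Un_disjoint[OF finA finB] by metis
    have hB: "card B \<le> (r choose 2)^(2^?k) * ?ex" using typeB[OF unif r2 nb gF fVH] unfolding B_def .
    have G2: "\<forall>e\<in>shadow HH. card e = 2" using shadow_edge(1) by blast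
    have hA: "card A \<le> 2^(2^?k) * (card HH * r^3 * n^(?k - 3))" "A \<noteq> {} \<Longrightarrow> ?k \<ge> 3"
      using typeA[where EH=EH and n=n and G="shadow HH" and r=r, OF finHH _ _ fVH] hsub(2) hfin G2 unfolding A_def by auto
    have m: "card HH \<le> card EF * n^2" by (rule hyper_card[OF gF unif rF nb])
    have hA': "card A \<le> 2^(2^?k) * card EF * r^3 * n^(?k - 1)"
    proof (cases "A = {}")
      case True then show ?thesis by simp
    next
      case False then have k3: "?k \<ge> 3" using hA(2) by simp
      then have ke: "?k - 1 = 2 + (?k - 3)" by simp
      have pk: "n^(?k-1) = n^2 * n^(?k-3)" unfolding ke by (rule power_add)
      have "card HH * r^3 * n^(?k-3) \<le> card EF * n^2 * r^3 * n^(?k-3)"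
        using m by (intro mult_le_mono1) 
      then have "card A \<le> 2^(2^?k) * (card EF * n^2 * r^3 * n^(?k-3))" using hA(1)
        by (meson le_trans mult_le_mono2)
      then show ?thesis using pk by (simp add: ac_simps)
    qed
    have "(r choose 2)^(2^?k) * ?ex \<le> ((r choose 2) + 1)^(2^?k) * ?ex"
      by (intro mult_le_mono1 power_mono) auto
    then show ?thesis using num hB hA' by linarith
  qed
qed

theorem proposition7:
  fixes VF :: "'a set" and EF :: "'a set set" and VH :: "'b set" and EH :: "'b set set"
    and r :: nat
  assumes "is_graph VF EF" and "is_graph VH EH" and "r \<ge> card VF"
  shows "\<exists>C1 C2 :: real. \<exists>N. \<forall>n\<ge>N.
           real (ex_hat r n VH EH VF EF)
             \<le> C1 * real (ex_gen n VH EH VF EF) + C2 * real n ^ (card VH - 1)"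
proof (rule exI[of _ "real (((r choose 2) + 1)^(2^card VH))"],
       rule exI[of _ "real (2^(2^card VH) * card EF * r^3)"],
       rule exI[of _ "card VF"], intro allI impI)
  fix n :: nat assume nF: "card VF \<le> n"
  let ?f = "\<lambda>HH. num_copies VH EH {0..<n} (shadow HH)"
  let ?X = "{?f HH | HH. HH \<in> uniform_hypergraphs r n \<and> \<not> contains_Berge VF EF {0..<n} HH}"
  let ?R = "((r choose 2) + 1)^(2^card VH) * ex_gen n VH EH VF EF
       + 2^(2^card VH) * card EF * r^3 * n ^ (card VH - 1)"
  have "?X \<subseteq> ?f ` Pow (Pow {0..<n})"
    unfolding uniform_hypergraphs_def by auto
  then have finX: "finite ?X" by (rule finite_subset) simp
  have "ex_hat r n VH EH VF EF \<le> ?R"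
  proof (cases "?X = {}")
    case True
    have "ex_hat r n VH EH VF EF = Sup ?X" unfolding ex_hat_def by simp
    also have "\<dots> = 0" unfolding True by (simp add: Sup_nat_def)
    finally show ?thesis by simp
  next
    case False
    have "Sup ?X = Max ?X" unfolding Sup_nat_def by (rule if_not_P[OF False])
    moreover have "Max ?X \<in> ?X" using finX False by (rule Max_in)
    ultimately obtain HH where "HH \<in> uniform_hypergraphs r n" "\<not> contains_Berge VF EF {0..<n} HH"
      "ex_hat r n VH EH VF EF = ?f HH" unfolding ex_hat_def by auto
    then show ?thesis using main_bound[OF assms(1,2,3) nF] by simp
  qed
  then have "real (ex_hat r n VH EH VF EF) \<le> real ?R" by (simp only: of_nat_le_iff)
  then show "real (ex_hat r n VH EH VF EF)
             \<le> real (((r choose 2) + 1)^(2^card VH)) * real (ex_gen n VH EH VF EF)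
               + real (2^(2^card VH) * card EF * r^3) * real n ^ (card VH - 1)" by simp
qed

end
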